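(* Let $\lambda$ be a singular cardinal and let $\langle\lambda_i\mid i<\mathrm{cf}(\lambda)\rangle$ be a strictly increasing sequence of regular cardinals cofinal in $\lambda$. Let $\langle f_\alpha\mid\alpha<\lambda^+\rangle$ be a sequence of functions in $\prod_{i<\mathrm{cf}(\lambda)}\lambda_i$ that is unbounded with respect to $<^*$ and satisfies $f_\alpha<^*f_\beta$ for all $\alpha<\beta<\lambda^+$. Then for every $Z\subseteq\lambda^+$ with $|Z|=\lambda^+$, the set $$I_Z:=\{i<\mathrm{cf}(\lambda)\mid \sup\{\epsilon<\lambda_i\mid \sup\{\beta\in Z\mid f_\beta(i)=\epsilon\}=\lambda^+\}=\lambda_i\}$$ is cofinal in $\mathrm{cf}(\lambda)$.
   Context: For $f,g\in\prod_{i<\mathrm{cf}(\lambda)}\lambda_i$, $f<^*g$ means that the set $\{i<\mathrm{cf}(\lambda)\mid f(i)\ge g(i)\}$ is bounded in $\mathrm{cf}(\lambda)$. A family is unbounded with respect to $<^*$ if there is no single $g\in\prod_{i<\mathrm{cf}(\lambda)}\lambda_i$ with $f<^*g$ for all $f$ in the family. *)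

theory Defs
  imports Main
begin

unbundle cardinal_syntax

text \<open>Ordinals below a cardinal are represented as elements of the field of a
 cardinal order relation (HOL-Cardinals convention).  The cardinal lambda is a
 Card_order relation L; lambda^+ is cardSuc L; cf(lambda) is a Card_order c
 with index type 'i.\<close>

definition cof_in :: "'a set \<Rightarrow> 'a rel \<Rightarrow> bool" where
  "cof_in A r \<longleftrightarrow> (\<forall>a\<in>Field r. \<exists>b\<in>A. (a,b) \<in> r)"

definition is_cofinality :: "'a rel \<Rightarrow> 'i rel \<Rightarrow> bool" where
  "is_cofinality L c \<longleftrightarrow> Card_order c \<and>
     (\<exists>K. K \<subseteq> Field L \<and> cof_in K L \<and> (card_of K, c) \<in> ordIso) \<and>
     (\<forall>K. K \<subseteq> Field L \<and> cof_in K L \<longrightarrow> (c, card_of K) \<in> ordLeq)"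

text \<open>sup S = delta, for S a set of ordinals below delta (delta the order type
 of the well-order restricted to D): every gamma < delta lies strictly below some
 element of S.\<close>
definition sup_eq :: "'a rel \<Rightarrow> 'a set \<Rightarrow> 'a set \<Rightarrow> bool" where
  "sup_eq r D S \<longleftrightarrow> (\<forall>\<gamma>\<in>D. \<exists>\<beta>\<in>S. (\<gamma>,\<beta>) \<in> r \<and> \<gamma> \<noteq> \<beta>)"

text \<open>The product of lambda_i, i < cf(lambda), lambda_i = underS L (lam i).\<close>
definition prod_seq :: "'i rel \<Rightarrow> 'a rel \<Rightarrow> ('i \<Rightarrow> 'a) \<Rightarrow> ('i \<Rightarrow> 'a) set" where
  "prod_seq c L lam = {g. \<forall>i\<in>Field c. g i \<in> underS L (lam i)}"

definition less_star :: "'i rel \<Rightarrow> 'a rel \<Rightarrow> ('i \<Rightarrow> 'a) \<Rightarrow> ('i \<Rightarrow> 'a) \<Rightarrow> bool" where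
  "less_star c L f g \<longleftrightarrow>
     (\<exists>j\<in>Field c. \<forall>i\<in>{i\<in>Field c. (g i, f i) \<in> L}. (i,j) \<in> c)"

definition I_Z :: "'i rel \<Rightarrow> 'a rel \<Rightarrow> ('i \<Rightarrow> 'a) \<Rightarrow> ('a set \<Rightarrow> 'i \<Rightarrow> 'a) \<Rightarrow> 'a set set \<Rightarrow> 'i set" where
  "I_Z c L lam f Z = {i\<in>Field c.
     sup_eq L (underS L (lam i))
       {\<epsilon>\<in>underS L (lam i).
          sup_eq (cardSuc L) (Field (cardSuc L)) {\<beta>\<in>Z. f \<beta> i = \<epsilon>}}}"

end

theory Submission
  imports Defs
begin

lemma under_small:
  assumes L: "Card_order L" and inf: "infinite (Field L)"
    and d: "d \<in> Field (cardSuc L)"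
  shows "|under (cardSuc L) d| \<le>o |Field L|"
proof -
  have K: "Card_order (cardSuc L)" using cardSuc_Card_order[OF L] .
  have 1: "|underS (cardSuc L) d| <o cardSuc L" using card_of_underS[OF K d] .
  have 2: "|underS (cardSuc L) d| \<le>o L"
  proof (rule ccontr)
    assume "\<not> ?thesis"
    hence "L <o |underS (cardSuc L) d|"
      using not_ordLeq_iff_ordLess L card_order_on_well_order_on card_of_Well_order by blast
    hence "cardSuc L \<le>o |underS (cardSuc L) d|"
      using cardSuc_ordLess_ordLeq[OF L card_of_Card_order] by blast
    thus False using 1 not_ordLess_ordLeq by blast
  qed
  have 3: "|underS (cardSuc L) d| \<le>o |Field L|"
    using 2 ordLeq_ordIso_trans ordIso_symmetric card_of_Field_ordIso[OF L] by blast
  have 4: "|{d}| \<le>o |Field L|"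
    using card_of_singl_ordLeq inf by (metis finite.emptyI)
  have FF: "Field |Field L| = Field L" by (rule Field_card_of)
  have 5: "|underS (cardSuc L) d \<union> {d}| \<le>o |Field L|"
    apply (rule card_of_Un_ordLeq_infinite_Field)
    apply (simp add: FF inf)
    apply (rule 3) apply (rule 4)
    by (rule card_of_Card_order)
  have "under (cardSuc L) d \<subseteq> underS (cardSuc L) d \<union> {d}"
    unfolding under_def underS_def by auto
  thus ?thesis by (rule ordLeq_transitive[OF card_of_mono1 5])
qed


lemma insert_small:
  assumes inf: "infinite (Field L)" and X: "|X| \<le>o |Field L|"
  shows "|insert x X| \<le>o |Field L|"
proof -
  have FF: "Field |Field L| = Field L" by (rule Field_card_of)
  have 4: "|{x}| \<le>o |Field L|"
    using card_of_singl_ordLeq inf by (metis finite.emptyI)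
  have "|{x} \<union> X| \<le>o |Field L|"
    apply (rule card_of_Un_ordLeq_infinite_Field)
    apply (simp add: FF inf)
    apply (rule 4) apply (rule X)
    by (rule card_of_Card_order)
  thus ?thesis by simp
qed

lemma above_Z:
  assumes L: "Card_order L" and inf: "infinite (Field L)"
    and Z_sub: "Z \<subseteq> Field (cardSuc L)"
    and Z_card: "(card_of Z, cardSuc L) \<in> ordIso"
    and S: "S \<subseteq> Field (cardSuc L)" and Sc: "|S| \<le>o |Field L|"
  shows "\<exists>\<beta>\<in>Z. \<forall>\<delta>\<in>S. (\<delta>,\<beta>) \<in> cardSuc L \<and> \<delta> \<noteq> \<beta>"
proof -
  let ?K = "cardSuc L"
  have K: "Card_order ?K" using cardSuc_Card_order[OF L] .
  have wK: "wo_rel ?K" using Card_order_wo_rel[OF K] .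
  let ?U = "\<Union>\<delta>\<in>S. under ?K \<delta>"
  have U: "|?U| \<le>o |Field L|"
    apply (rule card_of_UNION_ordLeq_infinite[OF inf Sc])
    using under_small[OF L inf] S by blast
  have "\<not> Z \<subseteq> ?U"
  proof
    assume "Z \<subseteq> ?U"
    hence "|Z| \<le>o |Field L|" by (rule ordLeq_transitive[OF card_of_mono1 U])
    hence "?K \<le>o |Field L|" by (rule ordIso_ordLeq_trans[OF ordIso_symmetric[OF Z_card]])
    hence "?K \<le>o L" by (rule ordLeq_ordIso_trans[OF _ card_of_Field_ordIso[OF L]])
    thus False using cardSuc_greater[OF L] not_ordLess_ordLeq by blast
  qed
  then obtain \<beta> where b: "\<beta> \<in> Z" "\<beta> \<notin> ?U" by blast
  have bF: "\<beta> \<in> Field ?K" using b Z_sub by blast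
  have "\<forall>\<delta>\<in>S. (\<delta>,\<beta>) \<in> ?K \<and> \<delta> \<noteq> \<beta>"
  proof
    fix \<delta> assume d: "\<delta> \<in> S"
    hence dF: "\<delta> \<in> Field ?K" using S by blast
    have "(\<beta>,\<delta>) \<notin> ?K" using b d unfolding under_def by blast
    hence 1: "(\<delta>,\<beta>) \<in> ?K" using wo_rel.TOTALS[OF wK] dF bF by blast
    have "(\<beta>,\<beta>) \<in> ?K" using wo_rel.REFL[OF wK] bF unfolding refl_on_def by blast
    hence "\<delta> \<noteq> \<beta>" using \<open>(\<beta>,\<delta>) \<notin> ?K\<close> by blast
    thus "(\<delta>,\<beta>) \<in> ?K \<and> \<delta> \<noteq> \<beta>" using 1 by blast
  qed
  thus ?thesis using b by blast
qed


theorem mainTheorem5: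
  fixes L :: "'a rel" and c :: "'i rel" and lam :: "'i \<Rightarrow> 'a"
    and f :: "'a set \<Rightarrow> 'i \<Rightarrow> 'a" and Z :: "'a set set"
  assumes L_card: "Card_order L" and L_inf: "infinite (Field L)"
    and c_cof: "is_cofinality L c"
    and singular: "(c, L) \<in> ordLess"
    and lam_in: "\<forall>i\<in>Field c. lam i \<in> Field L"
    and lam_regular: "\<forall>i\<in>Field c. Card_order (Restr L (underS L (lam i)))
         \<and> regularCard (Restr L (underS L (lam i))) \<and> infinite (underS L (lam i))"
    and lam_incr: "\<forall>i\<in>Field c. \<forall>j\<in>Field c. (i,j) \<in> c \<and> i \<noteq> j \<longrightarrow>
         (lam i, lam j) \<in> L \<and> lam i \<noteq> lam j"
    and lam_cofinal: "\<forall>a\<in>Field L. \<exists>i\<in>Field c. (a, lam i) \<in> L"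
    and f_in: "\<forall>\<alpha>\<in>Field (cardSuc L). f \<alpha> \<in> prod_seq c L lam"
    and f_unbdd: "\<not> (\<exists>g\<in>prod_seq c L lam. \<forall>\<alpha>\<in>Field (cardSuc L). less_star c L (f \<alpha>) g)"
    and f_incr: "\<forall>\<alpha>\<in>Field (cardSuc L). \<forall>\<beta>\<in>Field (cardSuc L).
         (\<alpha>,\<beta>) \<in> cardSuc L \<and> \<alpha> \<noteq> \<beta> \<longrightarrow> less_star c L (f \<alpha>) (f \<beta>)"
    and Z_sub: "Z \<subseteq> Field (cardSuc L)"
    and Z_card: "(card_of Z, cardSuc L) \<in> ordIso"
  shows "cof_in (I_Z c L lam f Z) c"
  proof (rule ccontr)
  let ?K = "cardSuc L"
  let ?F = "Field (cardSuc L)"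
  define A where "A i = underS L (lam i)" for i
  define E where "E i = {\<epsilon>\<in>A i. sup_eq ?K ?F {\<beta>\<in>Z. f \<beta> i = \<epsilon>}}" for i
  have K: "Card_order ?K" using cardSuc_Card_order[OF L_card] .
  have wK: "wo_rel ?K" using Card_order_wo_rel[OF K] .
  have wL: "wo_rel L" using Card_order_wo_rel[OF L_card] .
  have cC: "Card_order c" using c_cof unfolding is_cofinality_def by blast
  have wc: "wo_rel c" using Card_order_wo_rel[OF cC] .
  have totL: "\<And>x y. x \<in> Field L \<Longrightarrow> y \<in> Field L \<Longrightarrow> (x,y) \<in> L \<or> (y,x) \<in> L"
    using wo_rel.TOTALS[OF wL] by blast
  have trL: "\<And>x y z. (x,y) \<in> L \<Longrightarrow> (y,z) \<in> L \<Longrightarrow> (x,z) \<in> L"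
    using wo_rel.TRANS[OF wL] unfolding trans_def by blast
  have asL: "\<And>x y. (x,y) \<in> L \<Longrightarrow> (y,x) \<in> L \<Longrightarrow> x = y"
    using wo_rel.ANTISYM[OF wL] unfolding antisym_def by blast
  have rfL: "\<And>x. x \<in> Field L \<Longrightarrow> (x,x) \<in> L"
    using wo_rel.REFL[OF wL] unfolding refl_on_def by blast
  have totc: "\<And>x y. x \<in> Field c \<Longrightarrow> y \<in> Field c \<Longrightarrow> (x,y) \<in> c \<or> (y,x) \<in> c"
    using wo_rel.TOTALS[OF wc] by blast
  have trc: "\<And>x y z. (x,y) \<in> c \<Longrightarrow> (y,z) \<in> c \<Longrightarrow> (x,z) \<in> c"
    using wo_rel.TRANS[OF wc] unfolding trans_def by blast
  have rfc: "\<And>x. x \<in> Field c \<Longrightarrow> (x,x) \<in> c"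
    using wo_rel.REFL[OF wc] unfolding refl_on_def by blast
  have AF: "\<And>i. A i \<subseteq> Field L" unfolding A_def underS_def Field_def by blast
  have Ane: "\<And>i. i \<in> Field c \<Longrightarrow> A i \<noteq> {}" using lam_regular unfolding A_def by fastforce
  assume "\<not> cof_in (I_Z c L lam f Z) c"
  then obtain a where a: "a \<in> Field c" "\<forall>b\<in>I_Z c L lam f Z. (a,b) \<notin> c"
    unfolding cof_in_def by blast
  have nsup: "\<not> sup_eq L (A i) (E i)" if "i \<in> Field c" "(a,i) \<in> c" for i
    using a that unfolding I_Z_def A_def E_def by blast
  have succ: "\<exists>x\<in>A i. (\<gamma>,x) \<in> L \<and> x \<noteq> \<gamma>" if i: "i \<in> Field c" and g: "\<gamma> \<in> A i" for i \<gamma>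
  proof -
    let ?R = "Restr L (A i)"
    have R: "Card_order ?R" "infinite (A i)" using lam_regular i unfolding A_def by auto
    have FR: "Field ?R = A i"
    proof
      show "Field ?R \<subseteq> A i" unfolding Field_def by blast
      show "A i \<subseteq> Field ?R"
      proof
        fix x assume "x \<in> A i"
        hence "(x,x) \<in> ?R" using rfL AF by blast
        thus "x \<in> Field ?R" unfolding Field_def by blast
      qed
    qed
    have "Field ?R \<noteq> under ?R \<gamma>"
      using Card_order_infinite_not_under[OF R(1)] R(2) FR by auto
    moreover have "under ?R \<gamma> \<subseteq> Field ?R" unfolding under_def Field_def by blast
    ultimately obtain x where x: "x \<in> A i" "x \<notin> under ?R \<gamma>" using FR by blast
    hence "(x,\<gamma>) \<notin> L" using g unfolding under_def by blast
    moreover hence "(\<gamma>,x) \<in> L" using totL AF x g by blast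
    moreover have "x \<noteq> \<gamma>" using calculation(1) rfL AF g by blast
    ultimately show ?thesis using x by blast
  qed
  have gex: "\<exists>x. x \<in> A i \<and> (\<forall>\<epsilon>\<in>A i. (x,\<epsilon>) \<in> L \<longrightarrow> \<epsilon> \<notin> E i)"
    if i: "i \<in> Field c" "(a,i) \<in> c" for i
  proof -
    obtain \<gamma> where g: "\<gamma> \<in> A i" "\<forall>\<epsilon>\<in>E i. \<not> ((\<gamma>,\<epsilon>) \<in> L \<and> \<gamma> \<noteq> \<epsilon>)"
      using nsup[OF i] unfolding sup_eq_def by blast
    obtain x where x: "x \<in> A i" "(\<gamma>,x) \<in> L" "x \<noteq> \<gamma>" using succ[OF i(1) g(1)] by blast
    have "\<forall>\<epsilon>\<in>A i. (x,\<epsilon>) \<in> L \<longrightarrow> \<epsilon> \<notin> E i"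
    proof (intro ballI impI notI)
      fix \<epsilon> assume e: "\<epsilon> \<in> A i" "(x,\<epsilon>) \<in> L" "\<epsilon> \<in> E i"
      have "(\<gamma>,\<epsilon>) \<in> L" using trL x(2) e(2) .
      hence "\<gamma> = \<epsilon>" using g(2) e(3) by blast
      thus False using asL x(2,3) e(2) by blast
    qed
    thus ?thesis using x by blast
  qed
  define g where "g i = (if i \<in> Field c \<and> (a,i) \<in> c
      then SOME x. x \<in> A i \<and> (\<forall>\<epsilon>\<in>A i. (x,\<epsilon>) \<in> L \<longrightarrow> \<epsilon> \<notin> E i)
      else SOME x. x \<in> A i)" for i
  have gA: "g i \<in> A i" if "i \<in> Field c" for i
  proof (cases "(a,i) \<in> c")
    case True
    show ?thesis using someI_ex[OF gex[OF that True]] that True unfolding g_def by auto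
  next
    case False
    have "\<exists>x. x \<in> A i" using Ane[OF that] by blast
    from someI_ex[OF this] show ?thesis using False unfolding g_def by auto
  qed
  have gE: "\<forall>\<epsilon>\<in>A i. (g i,\<epsilon>) \<in> L \<longrightarrow> \<epsilon> \<notin> E i" if "i \<in> Field c" "(a,i) \<in> c" for i
    using someI_ex[OF gex[OF that]] that unfolding g_def by auto
  have g_prod: "g \<in> prod_seq c L lam" using gA unfolding prod_seq_def A_def by blast
  define P where "P = {(i,\<epsilon>). i \<in> Field c \<and> (a,i) \<in> c \<and> \<epsilon> \<in> A i \<and> (g i,\<epsilon>) \<in> L}"
  define D where "D p = (SOME \<delta>. \<delta> \<in> ?F \<and> (\<forall>\<beta>\<in>Z. f \<beta> (fst p) = snd p \<longrightarrow> \<not> ((\<delta>,\<beta>) \<in> ?K \<and> \<delta> \<noteq> \<beta>)))" for p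
  have Dp: "D p \<in> ?F \<and> (\<forall>\<beta>\<in>Z. f \<beta> (fst p) = snd p \<longrightarrow> \<not> ((D p,\<beta>) \<in> ?K \<and> D p \<noteq> \<beta>))"
    if p: "p \<in> P" for p
  proof -
    obtain i \<epsilon> where ie: "p = (i,\<epsilon>)" "i \<in> Field c" "(a,i) \<in> c" "\<epsilon> \<in> A i" "(g i,\<epsilon>) \<in> L"
      using p unfolding P_def by blast
    have "\<epsilon> \<notin> E i" using gE[OF ie(2,3)] ie(4,5) by blast
    hence "\<exists>\<delta>. \<delta> \<in> ?F \<and> (\<forall>\<beta>\<in>Z. f \<beta> i = \<epsilon> \<longrightarrow> \<not> ((\<delta>,\<beta>) \<in> ?K \<and> \<delta> \<noteq> \<beta>))"
      using ie(4) unfolding E_def sup_eq_def by blast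
    from someI_ex[OF this] show ?thesis unfolding D_def ie(1) by simp
  qed
  have cF: "|Field c| \<le>o |Field L|" by (rule card_of_mono2[OF ordLess_imp_ordLeq[OF singular]])
  have PU: "P \<subseteq> (\<Union>i\<in>Field c. (\<lambda>\<epsilon>. (i,\<epsilon>)) ` A i)" unfolding P_def by blast
  have Ucard: "|\<Union>i\<in>Field c. (\<lambda>\<epsilon>. (i,\<epsilon>)) ` A i| \<le>o |Field L|"
  proof (rule card_of_UNION_ordLeq_infinite[OF L_inf cF], rule ballI)
    fix i
    show "|(\<lambda>\<epsilon>. (i,\<epsilon>)) ` A i| \<le>o |Field L|"
      using ordLeq_transitive[OF card_of_image card_of_mono1[OF AF]] .
  qed
  have DPc: "|D ` P| \<le>o |Field L|"
    using ordLeq_transitive[OF card_of_image ordLeq_transitive[OF card_of_mono1[OF PU] Ucard]] .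
  have DPF: "D ` P \<subseteq> ?F" using Dp by blast
  have fA: "f \<beta> i \<in> A i" if "\<beta> \<in> ?F" "i \<in> Field c" for \<beta> i
    using f_in that unfolding prod_seq_def A_def by blast
  have "\<forall>\<alpha>\<in>?F. less_star c L (f \<alpha>) g"
  proof
    fix \<alpha> assume al: "\<alpha> \<in> ?F"
    have iF: "insert \<alpha> (D ` P) \<subseteq> ?F" using al DPF by blast
    obtain \<beta> where b: "\<beta> \<in> Z" "\<forall>\<delta>\<in>insert \<alpha> (D ` P). (\<delta>,\<beta>) \<in> ?K \<and> \<delta> \<noteq> \<beta>"
      using above_Z[OF L_card L_inf Z_sub Z_card iF insert_small[OF L_inf DPc]] by blast
    have bF: "\<beta> \<in> ?F" using b Z_sub by blast
    have ba: "(i,a) \<in> c" if i: "i \<in> Field c" "(g i, f \<beta> i) \<in> L" for i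
    proof (rule ccontr)
      assume "(i,a) \<notin> c"
      hence ai: "(a,i) \<in> c" using totc a(1) i(1) by blast
      have "(i, f \<beta> i) \<in> P" unfolding P_def using i ai fA[OF bF i(1)] by blast
      hence "\<not> ((D (i, f \<beta> i),\<beta>) \<in> ?K \<and> D (i, f \<beta> i) \<noteq> \<beta>)" using Dp b(1) by fastforce
      moreover have "D (i, f \<beta> i) \<in> D ` P" using \<open>(i, f \<beta> i) \<in> P\<close> by blast
      ultimately show False using b(2) by blast
    qed
    have "less_star c L (f \<alpha>) (f \<beta>)" using f_incr al bF b(2) by blast
    then obtain j where j: "j \<in> Field c" "\<forall>i\<in>Field c. (f \<beta> i, f \<alpha> i) \<in> L \<longrightarrow> (i,j) \<in> c"
      unfolding less_star_def by blast
    define m where "m = (if (a,j) \<in> c then j else a)"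
    have mF: "m \<in> Field c" using a(1) j(1) unfolding m_def by simp
    have am: "(a,m) \<in> c" using rfc a(1) unfolding m_def by simp
    have jm: "(j,m) \<in> c" using rfc j(1) totc a(1) unfolding m_def by auto
    have "\<forall>i\<in>{i\<in>Field c. (g i, f \<alpha> i) \<in> L}. (i,m) \<in> c"
    proof
      fix i assume "i \<in> {i\<in>Field c. (g i, f \<alpha> i) \<in> L}"
      hence i: "i \<in> Field c" "(g i, f \<alpha> i) \<in> L" by auto
      show "(i,m) \<in> c"
      proof (cases "(g i, f \<beta> i) \<in> L")
        case True
        thus ?thesis using ba[OF i(1) True] am trc by blast
      next
        case False
        hence "(f \<beta> i, g i) \<in> L" using totL AF gA[OF i(1)] fA[OF bF i(1)] by blast
        hence "(f \<beta> i, f \<alpha> i) \<in> L" using trL i(2) by blast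
        hence "(i,j) \<in> c" using j(2) i(1) by blast
        thus ?thesis using jm trc by blast
      qed
    qed
    thus "less_star c L (f \<alpha>) g" unfolding less_star_def using mF by blast
  qed
  thus False using f_unbdd g_prod by blast
qed

end
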